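(* Let $p\ge 1$, $\sigma>0$, and let $H:\mathcal{H}\times\mathcal{X}^n\to\mathbb{R}$ be such that for every $h\in\mathcal{H}$ the random variable $H(h,\mathbf{X})$, $\mathbf{X}\sim\mu^n$, is $\sigma$-subgaussian. Let $Z(\mathbf{x})=\int_{\mathcal{H}}e^{H(h,\mathbf{x})}d\pi(h)$ (assumed finite and positive, with $\int_{\mathcal{H}}e^{\mathbb{E}[H(h,\mathbf{X})]}d\pi(h)$ finite and positive). Then: (i) $\ln\mathbb{E}\left[e^{p\left(-\ln Z(\mathbf{X})+\mathbb{E}[\ln Z(\mathbf{X}')]\right)}\right]\le p^2\sigma^2$. (ii) If $f:\mathcal{X}^n\to\mathbb{R}$ is such that $f(\mathbf{X})$ is $\rho$-subgaussian, then $$\ln\mathbb{E}\left[e^{p\left(f(\mathbf{X})-\mathbb{E}[f(\mathbf{X}')]-\ln Z(\mathbf{X})+\mathbb{E}[\ln Z(\mathbf{X}')]\right)}\right]\le p^2(\rho+\sigma)^2.$$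
   Context: $\mathcal{X}$ is a measurable space with probability measure $\mu$; $\mathbf{X}\sim\mu^n$ and $\mathbf{X}'$ is an independent copy. $\mathcal{H}$ is a measurable space with nonnegative measure $\pi$; $H$ is jointly measurable. A real random variable $Y$ is $\sigma$-subgaussian if $\mathbb{E}[e^{\lambda(Y-\mathbb{E}[Y])}]\le e^{\lambda^2\sigma^2/2}$ for every $\lambda\in\mathbb{R}$. All expectations appearing are assumed finite. *)

theory Defs
  imports "HOL-Probability.Probability"
begin

definition subgaussian :: "'a measure \<Rightarrow> ('a \<Rightarrow> real) \<Rightarrow> real \<Rightarrow> bool" where
  "subgaussian P Y \<sigma> \<longleftrightarrow>
     integrable P Y \<and>
     (\<forall>l::real. integrable P (\<lambda>x. exp (l * (Y x - integral\<^sup>L P Y))) \<and>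
        integral\<^sup>L P (\<lambda>x. exp (l * (Y x - integral\<^sup>L P Y))) \<le> exp (l\<^sup>2 * \<sigma>\<^sup>2 / 2))"

text \<open>The n-fold product measure mu^n on X^n, with X^n represented as nat \<Rightarrow> 'x
  (coordinates 0..n-1, extensional).\<close>
abbreviation prod_sample :: "nat \<Rightarrow> 'x measure \<Rightarrow> (nat \<Rightarrow> 'x) measure" where
  "prod_sample n \<mu> \<equiv> PiM {..<n} (\<lambda>_. \<mu>)"

definition partZ :: "'h measure \<Rightarrow> ('h \<Rightarrow> 'b \<Rightarrow> real) \<Rightarrow> 'b \<Rightarrow> real" where
  "partZ \<pi> H x = (\<integral>h. exp (H h x) \<partial>\<pi>)"

end

theory Submission imports Defs begin

lemma exp_tangent_ineq:
  fixes s v :: real assumes "s \<ge> 0"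
  shows "exp (- s * v) \<ge> 1 + s - s * exp v"
proof -
  have "exp (- s * v) \<ge> 1 + (- s * v)" by (rule exp_ge_add_one_self)
  moreover have "s * v + s \<le> s * exp v"
  proof -
    have "v + 1 \<le> exp v" using exp_ge_add_one_self[of v] by linarith
    then have "s * (v + 1) \<le> s * exp v" using assms by (intro mult_left_mono)
    then show ?thesis by (simp add: algebra_simps)
  qed
  ultimately show ?thesis by linarith
qed

lemma young_exp:
  fixes a b t :: real assumes "0 \<le> t" "t \<le> 1"
  shows "exp (t * a + (1 - t) * b) \<le> t * exp a + (1 - t) * exp b"
  proof -
  have "exp ((1 - t) *\<^sub>R b + t *\<^sub>R a) \<le> (1 - t) * exp b + t * exp a"
    using convex_onD[OF exp_convex, of t b a] assms by simp
  moreover have "(1 - t) *\<^sub>R b + t *\<^sub>R a = t * a + (1 - t) * b" by simp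
  ultimately show ?thesis by (simp add: add.commute)
qed

locale setting = D: prob_space D for D :: "'b measure" +
  fixes \<pi> :: "'h measure" and H :: "'h \<Rightarrow> 'b \<Rightarrow> real" and \<sigma> :: real
  assumes sigma: "\<sigma> > 0"
    and H_meas[measurable]: "(\<lambda>(h, x). H h x) \<in> borel_measurable (\<pi> \<Otimes>\<^sub>M D)"
    and H_subg: "\<And>h. h \<in> space \<pi> \<Longrightarrow> subgaussian D (H h) \<sigma>"
    and Z_fin: "\<And>x. x \<in> space D \<Longrightarrow> integrable \<pi> (\<lambda>h. exp (H h x))"
    and Z_pos: "\<And>x. x \<in> space D \<Longrightarrow> partZ \<pi> H x > 0"
    and EH_fin: "integrable \<pi> (\<lambda>h. exp (\<integral>x. H h x \<partial>D))"
    and EH_pos: "(\<integral>h. exp (\<integral>x. H h x \<partial>D) \<partial>\<pi>) > 0"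
    and lnZ_int: "integrable D (\<lambda>x. ln (partZ \<pi> H x))"
begin

lemma pi_sigma_finite: "sigma_finite_measure \<pi>"
proof
  obtain x0 where x0: "x0 \<in> space D" using D.not_empty by blast
  define g where "g h = exp (H h x0)" for h
  have gm[measurable]: "g \<in> borel_measurable \<pi>"
    unfolding g_def using measurable_comp[OF measurable_Pair2'[OF x0] H_meas] by (simp add: o_def)
  have gi: "integrable \<pi> g" unfolding g_def using Z_fin[OF x0] .
  define A where "A k = {h \<in> space \<pi>. 1 / real (Suc k) < g h}" for k
  have As: "A k \<in> sets \<pi>" for k unfolding A_def by measurable
  have Afin: "emeasure \<pi> (A k) \<noteq> \<infinity>" for k
  proof -
    have "emeasure \<pi> (A k) = (\<integral>\<^sup>+ h. indicator (A k) h \<partial>\<pi>)" using As by simp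
    also have "\<dots> \<le> (\<integral>\<^sup>+ h. ennreal (real (Suc k) * g h) \<partial>\<pi>)"
    proof (rule nn_integral_mono)
      fix h assume h: "h \<in> space \<pi>"
      show "indicator (A k) h \<le> ennreal (real (Suc k) * g h)"
      proof (cases "h \<in> A k")
        case True
        then have "1 / real (Suc k) < g h" by (simp add: A_def)
        then have "1 \<le> real (Suc k) * g h" by (simp add: field_simps)
        then show ?thesis using True by simp
      qed simp
    qed
    also have "\<dots> = ennreal (\<integral> h. real (Suc k) * g h \<partial>\<pi>)"
      by (rule nn_integral_eq_integral) (auto intro!: Z_fin[OF x0] simp: g_def)
    finally have "emeasure \<pi> (A k) \<noteq> top" by (rule neq_top_trans[OF ennreal_neq_top])
    then show ?thesis by simp
  qed
  have "(\<Union>k. A k) = space \<pi>"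
  proof (intro antisym subsetI)
    fix h assume "h \<in> (\<Union>k. A k)" then show "h \<in> space \<pi>" by (auto simp: A_def)
  next
    fix h assume "h \<in> space \<pi>"
    have "g h > 0" by (simp add: g_def)
    then obtain k where "1 / real (Suc k) < g h"
      using reals_Archimedean[of "g h"] by (auto simp: inverse_eq_divide)
    then show "h \<in> (\<Union>k. A k)" using \<open>h \<in> space \<pi>\<close> by (auto simp: A_def)
  qed
  then show "\<exists>A::'h set set. countable A \<and> A \<subseteq> sets \<pi> \<and> (\<Union>A) = space \<pi> \<and> (\<forall>a\<in>A. emeasure \<pi> a \<noteq> \<infinity>)"
    using As Afin by (intro exI[of _ "range A"]) auto
qed

sublocale pi: sigma_finite_measure \<pi> by (rule pi_sigma_finite)
sublocale pair_sigma_finite \<pi> D by unfold_locales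


definition "EH h = (\<integral>x. H h x \<partial>D)"
definition "W = (\<integral>h. exp (EH h) \<partial>\<pi>)"

lemma EH_meas[measurable]: "EH \<in> borel_measurable \<pi>"
proof -
  have "(\<lambda>h. \<integral>x. H h x \<partial>D) \<in> borel_measurable \<pi>"
    by (rule D.borel_measurable_lebesgue_integral) (use H_meas in simp)
  then show ?thesis unfolding EH_def[abs_def] .
qed

lemma W_pos: "W > 0" using EH_pos unfolding W_def EH_def by simp

lemma EH_int: "integrable \<pi> (\<lambda>h. exp (EH h))" using EH_fin unfolding EH_def by simp

lemma H_meas2[measurable]: "(\<lambda>p. H (fst p) (snd p)) \<in> borel_measurable (\<pi> \<Otimes>\<^sub>M D)"
  using H_meas by (simp add: case_prod_beta')

lemma subg_bound:
  assumes h: "h \<in> space \<pi>"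
  shows "(\<integral>\<^sup>+x. ennreal (exp (EH h) * exp (l * (H h x - EH h))) \<partial>D) \<le> ennreal (exp (EH h) * exp (l\<^sup>2 * \<sigma>\<^sup>2 / 2))"
proof -
  from H_subg[OF h] have i: "integrable D (\<lambda>x. exp (l * (H h x - EH h)))"
    and b: "(\<integral>x. exp (l * (H h x - EH h)) \<partial>D) \<le> exp (l\<^sup>2 * \<sigma>\<^sup>2 / 2)"
    unfolding subgaussian_def EH_def by auto
  have "(\<integral>\<^sup>+x. ennreal (exp (EH h) * exp (l * (H h x - EH h))) \<partial>D)
      = ennreal (\<integral>x. exp (EH h) * exp (l * (H h x - EH h)) \<partial>D)"
    by (rule nn_integral_eq_integral) (use i in auto)
  also have "\<dots> = ennreal (exp (EH h) * (\<integral>x. exp (l * (H h x - EH h)) \<partial>D))" by simp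
  also have "\<dots> \<le> ennreal (exp (EH h) * exp (l\<^sup>2 * \<sigma>\<^sup>2 / 2))"
    using b by (intro ennreal_leI mult_left_mono) auto
  finally show ?thesis .
qed

lemma key_fubini:
  "(\<integral>\<^sup>+x. \<integral>\<^sup>+h. ennreal (exp (EH h) * exp (l * (H h x - EH h))) \<partial>\<pi> \<partial>D)
     \<le> ennreal (exp (l\<^sup>2 * \<sigma>\<^sup>2 / 2) * W)"
proof -
  have m: "(\<lambda>(h, x). ennreal (exp (EH h) * exp (l * (H h x - EH h)))) \<in> borel_measurable (\<pi> \<Otimes>\<^sub>M D)"
    by measurable
  have "(\<integral>\<^sup>+x. \<integral>\<^sup>+h. ennreal (exp (EH h) * exp (l * (H h x - EH h))) \<partial>\<pi> \<partial>D)
     = (\<integral>\<^sup>+h. \<integral>\<^sup>+x. ennreal (exp (EH h) * exp (l * (H h x - EH h))) \<partial>D \<partial>\<pi>)"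
    using Fubini[OF m] by simp
  also have "\<dots> \<le> (\<integral>\<^sup>+h. ennreal (exp (EH h) * exp (l\<^sup>2 * \<sigma>\<^sup>2 / 2)) \<partial>\<pi>)"
    by (intro nn_integral_mono subg_bound)
  also have "\<dots> = ennreal (\<integral>h. exp (EH h) * exp (l\<^sup>2 * \<sigma>\<^sup>2 / 2) \<partial>\<pi>)"
    by (rule nn_integral_eq_integral) (use EH_int in auto)
  also have "\<dots> = ennreal (exp (l\<^sup>2 * \<sigma>\<^sup>2 / 2) * W)" unfolding W_def by (simp add: mult.commute)
  finally show ?thesis .
qed


lemma Z_nn: "x \<in> space D \<Longrightarrow> ennreal (partZ \<pi> H x) = (\<integral>\<^sup>+h. ennreal (exp (H h x)) \<partial>\<pi>)"
  unfolding partZ_def by (rule nn_integral_eq_integral[symmetric]) (use Z_fin in auto)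

lemma Z_meas[measurable]: "partZ \<pi> H \<in> borel_measurable D"
proof -
  have "(\<lambda>x. exp (ln (partZ \<pi> H x))) \<in> borel_measurable D"
    using borel_measurable_integrable[OF lnZ_int] by measurable
  then show ?thesis
    by (rule measurable_cong[THEN iffD1, rotated]) (use Z_pos in auto)
qed

lemma EZ: "(\<integral>\<^sup>+x. ennreal (partZ \<pi> H x) \<partial>D) \<le> ennreal (exp (\<sigma>\<^sup>2 / 2) * W)"
proof -
  have "(\<integral>\<^sup>+x. ennreal (partZ \<pi> H x) \<partial>D)
     = (\<integral>\<^sup>+x. \<integral>\<^sup>+h. ennreal (exp (EH h) * exp (1 * (H h x - EH h))) \<partial>\<pi> \<partial>D)"
    by (intro nn_integral_cong) (simp add: Z_nn flip: exp_add)
  also have "\<dots> \<le> ennreal (exp (1\<^sup>2 * \<sigma>\<^sup>2 / 2) * W)" by (rule key_fubini)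
  finally show ?thesis by simp
qed

lemma Z_int: "integrable D (partZ \<pi> H)"
proof (rule integrableI_nonneg)
  show "AE x in D. 0 \<le> partZ \<pi> H x" using Z_pos by (auto intro!: AE_I2 less_imp_le)
  show "(\<integral>\<^sup>+x. ennreal (partZ \<pi> H x) \<partial>D) < \<infinity>" using EZ by (rule le_less_trans) simp
qed simp

lemma EZ_le: "(\<integral>x. partZ \<pi> H x \<partial>D) \<le> exp (\<sigma>\<^sup>2 / 2) * W"
proof -
  have "ennreal (\<integral>x. partZ \<pi> H x \<partial>D) = (\<integral>\<^sup>+x. ennreal (partZ \<pi> H x) \<partial>D)"
    by (rule nn_integral_eq_integral[symmetric]) (use Z_int Z_pos in \<open>auto intro: less_imp_le\<close>)
  also have "\<dots> \<le> ennreal (exp (\<sigma>\<^sup>2 / 2) * W)" by (rule EZ)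
  finally show ?thesis using W_pos by (subst (asm) ennreal_le_iff) auto
qed

lemma c0_bound: "(\<integral>x. ln (partZ \<pi> H x) \<partial>D) \<le> ln W + \<sigma>\<^sup>2 / 2"
proof -
  define A where "A = exp (\<sigma>\<^sup>2 / 2) * W"
  have A: "A > 0" using W_pos by (simp add: A_def)
  have pt: "ln z \<le> z / A + ln A - 1" if "z > 0" for z
  proof -
    have "ln (z / A) \<le> z / A - 1" using that A by (intro ln_le_minus_one) auto
    then show ?thesis using that A by (simp add: ln_div)
  qed
  have "(\<integral>x. ln (partZ \<pi> H x) \<partial>D) \<le> (\<integral>x. partZ \<pi> H x / A + ln A - 1 \<partial>D)"
  proof (intro integral_mono lnZ_int pt Z_pos)
    show "integrable D (\<lambda>x. partZ \<pi> H x / A + ln A - 1)"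
      using Z_int by (intro Bochner_Integration.integrable_diff Bochner_Integration.integrable_add
          integrable_divide D.integrable_const)
  qed
  also have "\<dots> = (\<integral>x. partZ \<pi> H x \<partial>D) / A + ln A - 1"
    using Z_int by (simp add: D.prob_space)
  also have "\<dots> \<le> 1 + ln A - 1"
    using EZ_le A by (simp add: A_def divide_le_eq_1)
  also have "\<dots> = ln W + \<sigma>\<^sup>2 / 2" using W_pos by (simp add: A_def ln_mult)
  finally show ?thesis .
qed


lemma H_meas_h: "x \<in> space D \<Longrightarrow> (\<lambda>h. H h x) \<in> borel_measurable \<pi>"
  using measurable_comp[OF measurable_Pair2' H_meas2] by (simp add: o_def)

lemma pointwise:
  assumes x: "x \<in> space D" and s: "s \<ge> 0"
  shows "ennreal (exp (- s * (ln (partZ \<pi> H x) - ln W)) * W)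
     \<le> (\<integral>\<^sup>+h. ennreal (exp (EH h) * exp ((- s) * (H h x - EH h))) \<partial>\<pi>)"
proof -
  note [measurable] = H_meas_h[OF x]
  define c where "c = ln (partZ \<pi> H x) - ln W"
  have Zx: "partZ \<pi> H x > 0" using Z_pos[OF x] .
  have ec: "exp (- c) * partZ \<pi> H x = W" using Zx W_pos
    by (simp add: c_def exp_diff exp_minus field_simps)
  define N where "N = (\<integral>\<^sup>+h. ennreal (exp (EH h) * exp ((- s) * (H h x - EH h))) \<partial>\<pi>)"
  have pt: "exp (EH h) * exp ((- s) * (H h x - EH h)) * exp (s * c) + s * exp (- c) * exp (H h x)
      \<ge> (1 + s) * exp (EH h)" for h
  proof -
    define v where "v = H h x - EH h - c"
    have "exp (EH h) * (1 + s - s * exp v) \<le> exp (EH h) * exp (- s * v)"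
      using exp_tangent_ineq[OF s, of v] by (intro mult_left_mono) auto
    moreover have "exp (EH h) * exp (- s * v) = exp (EH h) * exp ((- s) * (H h x - EH h)) * exp (s * c)"
      by (simp add: v_def algebra_simps flip: exp_add)
    moreover have "exp (EH h) * exp v = exp (- c) * exp (H h x)"
      by (simp add: v_def algebra_simps flip: exp_add)
    ultimately show ?thesis by (simp add: algebra_simps)
  qed
  have "ennreal ((1 + s) * W) = ennreal (\<integral>h. (1 + s) * exp (EH h) \<partial>\<pi>)"
    by (simp add: W_def)
  also have "\<dots> = (\<integral>\<^sup>+h. ennreal ((1 + s) * exp (EH h)) \<partial>\<pi>)"
    by (rule nn_integral_eq_integral[symmetric]) (use EH_int s in auto)
  also have "\<dots> \<le> (\<integral>\<^sup>+h. ennreal (exp (EH h) * exp ((- s) * (H h x - EH h)) * exp (s * c))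
                      + ennreal (s * exp (- c) * exp (H h x)) \<partial>\<pi>)"
    using pt s by (intro nn_integral_mono) (simp flip: ennreal_plus)
  also have "\<dots> = (\<integral>\<^sup>+h. ennreal (exp (EH h) * exp ((- s) * (H h x - EH h))) * ennreal (exp (s * c)) \<partial>\<pi>)
                 + (\<integral>\<^sup>+h. ennreal (s * exp (- c)) * ennreal (exp (H h x)) \<partial>\<pi>)"
    using s by (subst nn_integral_add) (auto simp flip: ennreal_mult)
  also have "\<dots> = N * ennreal (exp (s * c)) + ennreal (s * exp (- c)) * ennreal (partZ \<pi> H x)"
    unfolding N_def by (simp add: nn_integral_multc nn_integral_cmult Z_nn[OF x])
  also have "\<dots> = N * ennreal (exp (s * c)) + ennreal (s * W)"
    using s Zx by (simp add: mult.assoc ec flip: ennreal_mult)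
  finally have le: "ennreal ((1 + s) * W) \<le> N * ennreal (exp (s * c)) + ennreal (s * W)" .
  show ?thesis
  proof (cases "N = \<infinity>")
    case True then show ?thesis by (simp add: N_def)
  next
    case False
    then obtain r where r: "N = ennreal r" "r \<ge> 0" using False by (cases N) auto
    from le have "ennreal ((1 + s) * W) \<le> ennreal (r * exp (s * c) + s * W)"
      using r s W_pos by (simp add: ennreal_mult ennreal_plus)
    then have "(1 + s) * W \<le> r * exp (s * c) + s * W"
      using r s W_pos by (subst (asm) ennreal_le_iff) auto
    moreover have "(1 + s) * W = W + s * W" by (simp add: distrib_right)
    ultimately have "W \<le> r * exp (s * c)" by linarith
    then have "exp (- s * c) * W \<le> exp (- s * c) * (r * exp (s * c))" by (intro mult_left_mono) auto
    also have "\<dots> = r * (exp (- s * c) * exp (s * c))" by (simp only: mult_ac)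
    also have "\<dots> = r" by (simp flip: exp_add)
    finally show ?thesis using r by (simp add: N_def c_def)
  qed
qed


lemma H_meas3[measurable]: "(\<lambda>p. H (snd p) (fst p)) \<in> borel_measurable (D \<Otimes>\<^sub>M \<pi>)"
proof -
  have "(\<lambda>p. (snd p, fst p)) \<in> measurable (D \<Otimes>\<^sub>M \<pi>) (\<pi> \<Otimes>\<^sub>M D)" by measurable
  from measurable_comp[OF this H_meas2] show ?thesis by (simp add: o_def)
qed

lemma N_meas: "(\<lambda>x. \<integral>\<^sup>+h. ennreal (exp (EH h) * exp (l * (H h x - EH h))) \<partial>\<pi>) \<in> borel_measurable D"
proof (rule pi.borel_measurable_nn_integral)
  show "(\<lambda>(x, h). ennreal (exp (EH h) * exp (l * (H h x - EH h)))) \<in> borel_measurable (D \<Otimes>\<^sub>M \<pi>)"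
    by measurable
qed

lemma part_i_gen:
  assumes s: "s > 0"
  shows "(\<integral>\<^sup>+x. ennreal (exp (s * (- ln (partZ \<pi> H x) + (\<integral>x'. ln (partZ \<pi> H x') \<partial>D)))) \<partial>D)
     \<le> ennreal (exp (s * \<sigma>\<^sup>2 / 2 + s\<^sup>2 * \<sigma>\<^sup>2 / 2))"
proof -
  define c0 where "c0 = (\<integral>x'. ln (partZ \<pi> H x') \<partial>D)"
  define K where "K = exp (s * (c0 - ln W)) / W"
  have K: "K \<ge> 0" using W_pos by (simp add: K_def)
  define N where "N x = (\<integral>\<^sup>+h. ennreal (exp (EH h) * exp ((- s) * (H h x - EH h))) \<partial>\<pi>)" for x
  have Nm: "N \<in> borel_measurable D" unfolding N_def[abs_def] by (rule N_meas)
  have "(\<integral>\<^sup>+x. ennreal (exp (s * (- ln (partZ \<pi> H x) + c0))) \<partial>D)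
      = (\<integral>\<^sup>+x. ennreal K * ennreal (exp (- s * (ln (partZ \<pi> H x) - ln W)) * W) \<partial>D)"
  proof (intro nn_integral_cong)
    fix x
    have "exp (s * (- ln (partZ \<pi> H x) + c0)) = exp (s * (c0 - ln W)) * exp (- s * (ln (partZ \<pi> H x) - ln W))"
      by (simp add: algebra_simps flip: exp_add)
    then have "exp (s * (- ln (partZ \<pi> H x) + c0)) = K * (exp (- s * (ln (partZ \<pi> H x) - ln W)) * W)"
      using W_pos by (simp add: K_def)
    then show "ennreal (exp (s * (- ln (partZ \<pi> H x) + c0))) = ennreal K * ennreal (exp (- s * (ln (partZ \<pi> H x) - ln W)) * W)"
      using K W_pos by (simp add: ennreal_mult)
  qed
  also have "\<dots> \<le> (\<integral>\<^sup>+x. ennreal K * N x \<partial>D)"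
    using pointwise s unfolding N_def by (intro nn_integral_mono mult_left_mono) auto
  also have "\<dots> = ennreal K * (\<integral>\<^sup>+x. N x \<partial>D)" using Nm by (rule nn_integral_cmult)
  also have "\<dots> \<le> ennreal K * ennreal (exp ((- s)\<^sup>2 * \<sigma>\<^sup>2 / 2) * W)"
    unfolding N_def by (intro mult_left_mono key_fubini) auto
  also have "\<dots> = ennreal (exp (s * (c0 - ln W) + s\<^sup>2 * \<sigma>\<^sup>2 / 2))"
    using W_pos K by (simp add: K_def exp_add flip: ennreal_mult)
  also have "\<dots> \<le> ennreal (exp (s * \<sigma>\<^sup>2 / 2 + s\<^sup>2 * \<sigma>\<^sup>2 / 2))"
  proof -
    have "s * (c0 - ln W) \<le> s * (\<sigma>\<^sup>2 / 2)"
      using c0_bound s unfolding c0_def by (intro mult_left_mono) auto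
    then show ?thesis by (intro ennreal_leI) simp
  qed
  finally show ?thesis unfolding c0_def .
qed


lemma part_ii_pos:
  fixes f :: "'b \<Rightarrow> real" and \<rho> p :: real
  assumes p: "p \<ge> 1" and rho: "\<rho> > 0" and fs: "subgaussian D f \<rho>"
  shows "(\<integral>\<^sup>+x. ennreal (exp (p * (f x - (\<integral>x'. f x' \<partial>D) - ln (partZ \<pi> H x) + (\<integral>x'. ln (partZ \<pi> H x') \<partial>D)))) \<partial>D)
     \<le> ennreal (exp (p\<^sup>2 * (\<rho> + \<sigma>)\<^sup>2))"
proof -
  define c0 where "c0 = (\<integral>x'. ln (partZ \<pi> H x') \<partial>D)"
  define Ef where "Ef = (\<integral>x'. f x' \<partial>D)"
  define t where "t = \<rho> / (\<rho> + \<sigma>)"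
  have t0: "0 < t" and t1: "t < 1" using rho sigma by (auto simp: t_def field_simps)
  define l where "l = p / t"
  define s where "s = p / (1 - t)"
  have tl: "t * l = p" and ts: "(1 - t) * s = p" using t0 t1 by (auto simp: l_def s_def)
  have s0: "s > 0" using p t1 by (simp add: s_def)
  define A0 where "A0 = l\<^sup>2 * \<rho>\<^sup>2 / 2"
  define B0 where "B0 = s * \<sigma>\<^sup>2 / 2 + s\<^sup>2 * \<sigma>\<^sup>2 / 2"
  define a where "a x = l * (f x - Ef) - A0" for x
  define b where "b x = s * (- ln (partZ \<pi> H x) + c0) - B0" for x
  define E0 where "E0 = exp (t * A0 + (1 - t) * B0)"
  have fm[measurable]: "f \<in> borel_measurable D" using fs unfolding subgaussian_def by auto
  have lnm[measurable]: "(\<lambda>x. ln (partZ \<pi> H x)) \<in> borel_measurable D" by measurable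
  from fs have fi: "integrable D (\<lambda>x. exp (l * (f x - Ef)))"
    and fb: "(\<integral>x. exp (l * (f x - Ef)) \<partial>D) \<le> exp (l\<^sup>2 * \<rho>\<^sup>2 / 2)"
    unfolding subgaussian_def Ef_def by auto
  have ia: "(\<integral>\<^sup>+x. ennreal (exp (a x)) \<partial>D) \<le> 1"
  proof -
    have "(\<integral>\<^sup>+x. ennreal (exp (a x)) \<partial>D) = (\<integral>\<^sup>+x. ennreal (exp (- A0) * exp (l * (f x - Ef))) \<partial>D)"
      by (intro nn_integral_cong) (simp add: a_def flip: exp_add)
    also have "\<dots> = ennreal (\<integral>x. exp (- A0) * exp (l * (f x - Ef)) \<partial>D)"
      by (rule nn_integral_eq_integral) (use fi in auto)
    also have "\<dots> = ennreal (exp (- A0) * (\<integral>x. exp (l * (f x - Ef)) \<partial>D))" by simp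
    also have "\<dots> \<le> ennreal (exp (- A0) * exp (l\<^sup>2 * \<rho>\<^sup>2 / 2))"
      using fb by (intro ennreal_leI mult_left_mono) auto
    also have "\<dots> = 1" by (simp add: A0_def flip: exp_add)
    finally show ?thesis .
  qed
  have ib: "(\<integral>\<^sup>+x. ennreal (exp (b x)) \<partial>D) \<le> 1"
  proof -
    have "(\<integral>\<^sup>+x. ennreal (exp (b x)) \<partial>D) = (\<integral>\<^sup>+x. ennreal (exp (- B0)) * ennreal (exp (s * (- ln (partZ \<pi> H x) + c0))) \<partial>D)"
      by (intro nn_integral_cong) (simp add: b_def exp_diff exp_minus divide_inverse mult.commute flip: ennreal_mult)
    also have "\<dots> = ennreal (exp (- B0)) * (\<integral>\<^sup>+x. ennreal (exp (s * (- ln (partZ \<pi> H x) + c0))) \<partial>D)"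
      by (rule nn_integral_cmult) measurable
    also have "\<dots> \<le> ennreal (exp (- B0)) * ennreal (exp (s * \<sigma>\<^sup>2 / 2 + s\<^sup>2 * \<sigma>\<^sup>2 / 2))"
      using part_i_gen[OF s0] unfolding c0_def by (intro mult_left_mono) auto
    also have "\<dots> = 1" by (simp add: B0_def flip: ennreal_mult exp_add)
    finally show ?thesis .
  qed
  have "(\<integral>\<^sup>+x. ennreal (exp (p * (f x - Ef - ln (partZ \<pi> H x) + c0))) \<partial>D)
      \<le> (\<integral>\<^sup>+x. ennreal (E0 * t) * ennreal (exp (a x)) + ennreal (E0 * (1 - t)) * ennreal (exp (b x)) \<partial>D)"
  proof (intro nn_integral_mono)
    fix x
    have eq: "p * (f x - Ef - ln (partZ \<pi> H x) + c0) = (t * A0 + (1 - t) * B0) + (t * a x + (1 - t) * b x)"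
    proof -
      have "t * a x + (1 - t) * b x = (t * l) * (f x - Ef) + ((1 - t) * s) * (- ln (partZ \<pi> H x) + c0) - (t * A0 + (1 - t) * B0)"
        by (simp add: a_def b_def algebra_simps)
      then show ?thesis unfolding tl ts by (simp add: algebra_simps)
    qed
    have "exp (p * (f x - Ef - ln (partZ \<pi> H x) + c0)) = E0 * exp (t * a x + (1 - t) * b x)"
      unfolding eq E0_def by (simp add: exp_add)
    also have "\<dots> \<le> E0 * (t * exp (a x) + (1 - t) * exp (b x))"
      using young_exp[of t "a x" "b x"] t0 t1 by (intro mult_left_mono) (auto simp: E0_def)
    finally have "exp (p * (f x - Ef - ln (partZ \<pi> H x) + c0)) \<le> E0 * t * exp (a x) + E0 * (1 - t) * exp (b x)"
      by (simp add: algebra_simps)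
    then show "ennreal (exp (p * (f x - Ef - ln (partZ \<pi> H x) + c0)))
        \<le> ennreal (E0 * t) * ennreal (exp (a x)) + ennreal (E0 * (1 - t)) * ennreal (exp (b x))"
    proof -
      have "ennreal (E0 * t * exp (a x) + E0 * (1 - t) * exp (b x))
          = ennreal (E0 * t) * ennreal (exp (a x)) + ennreal (E0 * (1 - t)) * ennreal (exp (b x))"
        using t0 t1 by (subst ennreal_plus) (auto simp: E0_def ennreal_mult)
      with \<open>exp _ \<le> _\<close> show ?thesis by (metis ennreal_leI)
    qed
  qed
  also have "\<dots> = ennreal (E0 * t) * (\<integral>\<^sup>+x. ennreal (exp (a x)) \<partial>D) + ennreal (E0 * (1 - t)) * (\<integral>\<^sup>+x. ennreal (exp (b x)) \<partial>D)"
    by (subst nn_integral_add) (auto simp: a_def b_def nn_integral_cmult)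
  also have "\<dots> \<le> ennreal (E0 * t) * 1 + ennreal (E0 * (1 - t)) * 1"
    by (intro add_mono mult_left_mono ia ib) auto
  also have "\<dots> = ennreal E0" using t0 t1 by (simp add: E0_def flip: ennreal_plus) (simp add: algebra_simps)
  also have "\<dots> \<le> ennreal (exp (p\<^sup>2 * (\<rho> + \<sigma>)\<^sup>2))"
  proof (intro ennreal_leI)
    have "t * A0 = p\<^sup>2 * \<rho>\<^sup>2 / (2 * t)"
      using t0 by (simp add: A0_def l_def power2_eq_square field_simps)
    also have "\<dots> = p\<^sup>2 * \<rho> * (\<rho> + \<sigma>) / 2"
    proof -
      have "\<rho> + \<sigma> > 0" using rho sigma by simp
      then show ?thesis using rho by (simp add: t_def power2_eq_square field_simps)
    qed
    finally have e1: "t * A0 = p\<^sup>2 * \<rho> * (\<rho> + \<sigma>) / 2" .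
    have "(1 - t) * B0 = ((1 - t) * s) * \<sigma>\<^sup>2 / 2 + ((1 - t) * s) * s * \<sigma>\<^sup>2 / 2"
      by (simp add: B0_def power2_eq_square algebra_simps)
    also have "\<dots> = p * \<sigma>\<^sup>2 / 2 + p * s * \<sigma>\<^sup>2 / 2" unfolding ts ..
    also have "s = p * (\<rho> + \<sigma>) / \<sigma>"
    proof -
      have "1 - t = \<sigma> / (\<rho> + \<sigma>)" using rho sigma by (simp add: t_def field_simps)
      then show ?thesis by (simp add: s_def)
    qed
    also have "p * (p * (\<rho> + \<sigma>) / \<sigma>) * \<sigma>\<^sup>2 / 2 = p\<^sup>2 * \<sigma> * (\<rho> + \<sigma>) / 2"
      using sigma by (simp add: power2_eq_square)
    finally have e2: "(1 - t) * B0 = p * \<sigma>\<^sup>2 / 2 + p\<^sup>2 * \<sigma> * (\<rho> + \<sigma>) / 2" .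
    have "p * \<sigma>\<^sup>2 \<le> p\<^sup>2 * (\<rho> + \<sigma>)\<^sup>2"
    proof -
      have "p \<le> p\<^sup>2" using p by (simp add: power2_eq_square)
      moreover have "\<sigma>\<^sup>2 \<le> (\<rho> + \<sigma>)\<^sup>2" using rho sigma by (intro power_mono) auto
      ultimately show ?thesis using p by (intro mult_mono) auto
    qed
    moreover have "p\<^sup>2 * (\<rho> + \<sigma>)\<^sup>2 = p\<^sup>2 * \<rho> * (\<rho> + \<sigma>) + p\<^sup>2 * \<sigma> * (\<rho> + \<sigma>)"
      by (simp add: power2_eq_square algebra_simps)
    ultimately have "t * A0 + (1 - t) * B0 \<le> p\<^sup>2 * (\<rho> + \<sigma>)\<^sup>2"
      unfolding e1 e2 by linarith
    then show "E0 \<le> exp (p\<^sup>2 * (\<rho> + \<sigma>)\<^sup>2)" by (simp add: E0_def)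
  qed
  finally show ?thesis unfolding c0_def Ef_def .
qed

end

lemma ln_int_le:
  fixes g :: "'a \<Rightarrow> real"
  assumes gi: "integrable M g" and gp: "\<And>x. x \<in> space M \<Longrightarrow> g x > 0"
    and b: "(\<integral>\<^sup>+x. ennreal (g x) \<partial>M) \<le> ennreal (exp B)" and B: "B \<ge> 0"
  shows "ln (\<integral>x. g x \<partial>M) \<le> B"
proof -
  have "ennreal (\<integral>x. g x \<partial>M) = (\<integral>\<^sup>+x. ennreal (g x) \<partial>M)"
    by (rule nn_integral_eq_integral[symmetric]) (use gi gp in \<open>auto intro!: AE_I2 less_imp_le\<close>)
  with b have "ennreal (\<integral>x. g x \<partial>M) \<le> ennreal (exp B)" by simp
  then have le: "(\<integral>x. g x \<partial>M) \<le> exp B" using ennreal_le_iff[of "exp B"] by simp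
  have nn: "(\<integral>x. g x \<partial>M) \<ge> 0" using gp by (intro integral_nonneg_AE AE_I2) (auto intro: less_imp_le)
  show ?thesis
  proof (cases "(\<integral>x. g x \<partial>M) = 0")
    case True then show ?thesis using B by simp
  next
    case False
    then have "(\<integral>x. g x \<partial>M) > 0" using nn by simp
    then have "ln (\<integral>x. g x \<partial>M) \<le> ln (exp B)" using le by (subst ln_le_cancel_iff) auto
    then show ?thesis by simp
  qed
qed

theorem mainTheorem9:
  fixes \<mu> :: "'x measure" and n :: nat and \<pi> :: "'h measure"
    and H :: "'h \<Rightarrow> (nat \<Rightarrow> 'x) \<Rightarrow> real" and p \<sigma> :: real
  defines "D \<equiv> prod_sample n \<mu>"
  defines "Z \<equiv> partZ \<pi> H"
  assumes prob: "prob_space \<mu>"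
    and p: "p \<ge> 1" and sigma: "\<sigma> > 0"
    and H_meas: "(\<lambda>(h, x). H h x) \<in> borel_measurable (\<pi> \<Otimes>\<^sub>M D)"
    and H_subg: "\<And>h. h \<in> space \<pi> \<Longrightarrow> subgaussian D (H h) \<sigma>"
    and Z_fin: "\<And>x. x \<in> space D \<Longrightarrow> integrable \<pi> (\<lambda>h. exp (H h x))"
    and Z_pos: "\<And>x. x \<in> space D \<Longrightarrow> Z x > 0"
    and EH_fin: "integrable \<pi> (\<lambda>h. exp (\<integral>x. H h x \<partial>D))"
    and EH_pos: "(\<integral>h. exp (\<integral>x. H h x \<partial>D) \<partial>\<pi>) > 0"
    and lnZ_int: "integrable D (\<lambda>x. ln (Z x))"
    and i_int: "integrable D (\<lambda>x. exp (p * (- ln (Z x) + (\<integral>x'. ln (Z x') \<partial>D))))"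
  shows "ln (\<integral>x. exp (p * (- ln (Z x) + (\<integral>x'. ln (Z x') \<partial>D))) \<partial>D) \<le> p\<^sup>2 * \<sigma>\<^sup>2
     \<and> (\<forall>(f :: (nat \<Rightarrow> 'x) \<Rightarrow> real) (\<rho> :: real).
          \<rho> \<ge> 0 \<and> subgaussian D f \<rho> \<and>
          integrable D (\<lambda>x. exp (p * (f x - (\<integral>x'. f x' \<partial>D) - ln (Z x) + (\<integral>x'. ln (Z x') \<partial>D))))
          \<longrightarrow> ln (\<integral>x. exp (p * (f x - (\<integral>x'. f x' \<partial>D) - ln (Z x) + (\<integral>x'. ln (Z x') \<partial>D))) \<partial>D)
                \<le> p\<^sup>2 * (\<rho> + \<sigma>)\<^sup>2)"
proof -
  have pD: "prob_space D" unfolding D_def using prob by (intro prob_space_PiM)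
  interpret S: setting D \<pi> H \<sigma>
    using pD sigma H_meas H_subg Z_fin Z_pos EH_fin EH_pos lnZ_int unfolding Z_def
    by (intro setting.intro setting_axioms.intro) auto
  have p0: "p > 0" using p by simp
  have part1: "ln (\<integral>x. exp (p * (- ln (Z x) + (\<integral>x'. ln (Z x') \<partial>D))) \<partial>D) \<le> p\<^sup>2 * \<sigma>\<^sup>2"
  proof (rule ln_int_le[OF i_int])
    have "p * \<sigma>\<^sup>2 \<le> p\<^sup>2 * \<sigma>\<^sup>2" using p by (intro mult_right_mono) (auto simp: power2_eq_square)
    then have "exp (p * \<sigma>\<^sup>2 / 2 + p\<^sup>2 * \<sigma>\<^sup>2 / 2) \<le> exp (p\<^sup>2 * \<sigma>\<^sup>2)" by simp
    then show "(\<integral>\<^sup>+x. ennreal (exp (p * (- ln (Z x) + (\<integral>x'. ln (Z x') \<partial>D)))) \<partial>D) \<le> ennreal (exp (p\<^sup>2 * \<sigma>\<^sup>2))"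
      using S.part_i_gen[OF p0] unfolding Z_def by (meson ennreal_leI order_trans)
  qed auto
  have part2_pos: "ln (\<integral>x. exp (p * (f x - (\<integral>x'. f x' \<partial>D) - ln (Z x) + (\<integral>x'. ln (Z x') \<partial>D))) \<partial>D)
                \<le> p\<^sup>2 * (\<rho> + \<sigma>)\<^sup>2"
    if rho: "\<rho> > 0" and fs: "subgaussian D f \<rho>"
      and fi: "integrable D (\<lambda>x. exp (p * (f x - (\<integral>x'. f x' \<partial>D) - ln (Z x) + (\<integral>x'. ln (Z x') \<partial>D))))"
    for f :: "(nat \<Rightarrow> 'x) \<Rightarrow> real" and \<rho>
    by (rule ln_int_le[OF fi]) (use S.part_ii_pos[OF p rho fs] in \<open>auto simp: Z_def\<close>)
  have part2: "ln (\<integral>x. exp (p * (f x - (\<integral>x'. f x' \<partial>D) - ln (Z x) + (\<integral>x'. ln (Z x') \<partial>D))) \<partial>D)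
                \<le> p\<^sup>2 * (\<rho> + \<sigma>)\<^sup>2"
    if rho: "\<rho> \<ge> 0" and fs: "subgaussian D f \<rho>"
      and fi: "integrable D (\<lambda>x. exp (p * (f x - (\<integral>x'. f x' \<partial>D) - ln (Z x) + (\<integral>x'. ln (Z x') \<partial>D))))"
    for f :: "(nat \<Rightarrow> 'x) \<Rightarrow> real" and \<rho>
  proof (cases "\<rho> > 0")
    case True then show ?thesis using part2_pos fs fi by blast
  next
    case False
    then have r0: "\<rho> = 0" using rho by simp
    define L where "L = ln (\<integral>x. exp (p * (f x - (\<integral>x'. f x' \<partial>D) - ln (Z x) + (\<integral>x'. ln (Z x') \<partial>D))) \<partial>D)"
    have eps: "L \<le> p\<^sup>2 * (e + \<sigma>)\<^sup>2" if e: "e > 0" for e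
    proof -
      have one: "1 \<le> exp (l\<^sup>2 * e\<^sup>2 / 2)" for l
      proof -
        have "0 \<le> l\<^sup>2 * e\<^sup>2 / 2" by simp
        then show ?thesis by simp
      qed
      have "subgaussian D f e"
        using fs r0 unfolding subgaussian_def
        by (auto intro: order_trans[OF _ one])
      then show ?thesis unfolding L_def using part2_pos[OF e _ fi] by blast
    qed
    have "L \<le> p\<^sup>2 * (0 + \<sigma>)\<^sup>2"
    proof (rule tendsto_le[OF trivial_limit_at_right_real])
      show "((\<lambda>e. p\<^sup>2 * (e + \<sigma>)\<^sup>2) \<longlongrightarrow> p\<^sup>2 * (0 + \<sigma>)\<^sup>2) (at_right 0)"
        by (intro tendsto_intros)
      show "((\<lambda>e. L) \<longlongrightarrow> L) (at_right 0)" by simp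
      show "\<forall>\<^sub>F e in at_right 0. L \<le> p\<^sup>2 * (e + \<sigma>)\<^sup>2"
        using eventually_at_right_less[of "0::real"] by (rule eventually_mono) (rule eps)
    qed
    then show ?thesis using r0 by (simp add: L_def)
  qed
  show ?thesis using part1 part2 by blast
qed

end
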